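(* Let $f:\mathbb{R}^n\to\mathbb{R}$ be convex, differentiable and bounded from below, with $\nabla f$ being $L$-Lipschitz continuous ($L>0$), let $\lambda>0$, and let $H(x)=f(x)+\lambda\|x\|_0$. Let $\{x_k\},\{y_k\}$ be generated by the VMEPIHT method described in the context. Then: (1) every cluster point of $\{x_k\}$ is a local minimizer of $H$; (2) if $x^*$ is a cluster point of $\{x_k\}$, then $H(x_k)\to H(x^* )$.
   Context: $\|x\|_0$ denotes the number of nonzero components of $x\in\mathbb{R}^n$. For $x\in\mathbb{R}^n$, $I(x):=\{i: x_i=0\}$. For an index set $I\subseteq\{1,\dots,n\}$, $C_I:=\{x\in\mathbb{R}^n: x_i=0 \text{ for all } i\in I\}$, and $P_C(x)=\arg\min_{z\in C}\frac12\|z-x\|^2$ is the Euclidean projection onto $C$. VMEPIHT method: fix parameters $\mu>0$, $\lambda>0$ and a starting point $y_0\in\mathbb{R}^n$. For $k=0,1,2,\dots$: choose $x_k\in\arg\min_{x\in\mathbb{R}^n}\ \lambda\|x\|_0+\frac{L}{2}\|x-y_k+\frac1L\nabla f(y_k)\|^2+\frac{\mu}{2}\|x-y_k\|^2$; then choose a symmetric positive definite matrix $H_k$ and a step length $\alpha_k\ge 0$, and set $y_{k+1}=P_{C_{I(x_k)}}(x_k-\alpha_kH_k\nabla f(x_k))$, where $\alpha_k$ is chosen so that $f(y_{k+1})\leq f(x_k)$. *)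

theory Defs
  imports "HOL-Analysis.Analysis"
begin

definition l0norm :: "real ^ 'n \<Rightarrow> nat" where
  "l0norm x = card {i. x $ i \<noteq> 0}"

definition zero_idx :: "real ^ 'n \<Rightarrow> 'n set" where
  "zero_idx x = {i. x $ i = 0}"

definition C_set :: "'n set \<Rightarrow> (real ^ 'n) set" where
  "C_set I = {x. \<forall>i\<in>I. x $ i = 0}"

definition is_proj :: "(real ^ 'n) set \<Rightarrow> real ^ 'n \<Rightarrow> real ^ 'n \<Rightarrow> bool" where
  "is_proj C x p \<longleftrightarrow> p \<in> C \<and> (\<forall>z\<in>C. (1/2) * (norm (p - x))\<^sup>2 \<le> (1/2) * (norm (z - x))\<^sup>2)"

definition sym_pos_def_mat :: "real ^ 'n ^ 'n \<Rightarrow> bool" where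
  "sym_pos_def_mat A \<longleftrightarrow> transpose A = A \<and> (\<forall>v. v \<noteq> 0 \<longrightarrow> v \<bullet> (A *v v) > 0)"

definition cluster_point :: "(nat \<Rightarrow> real ^ 'n) \<Rightarrow> real ^ 'n \<Rightarrow> bool" where
  "cluster_point x c \<longleftrightarrow> (\<exists>r. strict_mono r \<and> (x \<circ> r) \<longlonglongrightarrow> c)"

definition local_minimizer :: "(real ^ 'n \<Rightarrow> real) \<Rightarrow> real ^ 'n \<Rightarrow> bool" where
  "local_minimizer h c \<longleftrightarrow> (\<exists>e>0. \<forall>x\<in>ball c e. h c \<le> h x)"

end

theory Submission
  imports Defs
begin


lemma sq_norm_split:
  fixes w :: "real ^ 'n"
  shows "(norm w)\<^sup>2 = (w $ i)\<^sup>2 + (\<Sum>j\<in>UNIV - {i}. (w $ j)\<^sup>2)"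
proof -
  have "(norm w)\<^sup>2 = (\<Sum>j\<in>UNIV. (w $ j)\<^sup>2)"
    unfolding power2_norm_eq_inner inner_vec_def by (simp add: power2_eq_square)
  also have "\<dots> = (w $ i)\<^sup>2 + (\<Sum>j\<in>UNIV - {i}. (w $ j)\<^sup>2)"
    by (simp add: sum.remove)
  finally show ?thesis .
qed

lemma sq_norm_change:
  fixes w w' :: "real ^ 'n"
  assumes "\<And>j. j \<noteq> i \<Longrightarrow> w' $ j = w $ j"
  shows "(norm w')\<^sup>2 = (norm w)\<^sup>2 - (w $ i)\<^sup>2 + (w' $ i)\<^sup>2"
proof -
  have "(\<Sum>j\<in>UNIV - {i}. (w' $ j)\<^sup>2) = (\<Sum>j\<in>UNIV - {i}. (w $ j)\<^sup>2)"
    using assms by (intro sum.cong) auto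
  then show ?thesis using sq_norm_split[of w i] sq_norm_split[of w' i] by simp
qed

definition upd :: "real ^ 'n \<Rightarrow> 'n \<Rightarrow> real \<Rightarrow> real ^ 'n" where
  "upd u i v = (\<chi> j. if j = i then v else u $ j)"

lemma upd_nth: "upd u i v $ j = (if j = i then v else u $ j)"
  by (simp add: upd_def)

lemma l0_upd_same:
  assumes "u $ i \<noteq> 0" "v \<noteq> 0"
  shows "l0norm (upd u i v) = l0norm u"
proof -
  have "{j. upd u i v $ j \<noteq> 0} = {j. u $ j \<noteq> 0}" using assms by (auto simp: upd_nth)
  then show ?thesis by (simp add: l0norm_def)
qed

lemma l0_upd_zero:
  fixes u :: "real ^ 'n"
  assumes "u $ i \<noteq> 0"
  shows "real (l0norm (upd u i 0)) = real (l0norm u) - 1"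
proof -
  have "{j. upd u i 0 $ j \<noteq> 0} = {j. u $ j \<noteq> 0} - {i}" by (auto simp: upd_nth)
  moreover have "i \<in> {j. u $ j \<noteq> 0}" using assms by simp
  ultimately have "card {j. upd u i 0 $ j \<noteq> 0} = card {j. u $ j \<noteq> 0} - 1"
    by (simp add: card_Diff_singleton)
  moreover have "card {j. u $ j \<noteq> 0} \<ge> 1"
    using \<open>i \<in> _\<close> by (metis One_nat_def Suc_leI card_gt_0_iff empty_iff finite)
  ultimately show ?thesis by (simp add: l0norm_def of_nat_diff)
qed

lemma quad_ident:
  fixes L \<mu> v a p q :: real
  assumes "L > 0" "\<mu> > 0"
  shows "L/2 * ((v - p + q/L)\<^sup>2 - (a - p + q/L)\<^sup>2) + \<mu>/2 * ((v - p)\<^sup>2 - (a - p)\<^sup>2)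
       = (L+\<mu>)/2 * ((v - (p - q/(L+\<mu>)))\<^sup>2 - (a - (p - q/(L+\<mu>)))\<^sup>2)"
proof -
  have sq: "(X + c)\<^sup>2 - (Y + c)\<^sup>2 = (X - Y) * (X + Y + 2*c)" for X Y c :: real
    by (simp add: power2_eq_square algebra_simps)
  have sq2: "(X - (P - c))\<^sup>2 - (Y - (P - c))\<^sup>2 = (X - Y) * (X - P + (Y - P) + 2*c)" for X Y P c :: real
    by (simp add: power2_eq_square algebra_simps)
  have "L/2 * ((v - p + q/L)\<^sup>2 - (a - p + q/L)\<^sup>2) = L/2 * ((v - a) * (v - p + (a - p) + 2 * (q/L)))"
    using sq[of "v - p" "q/L" "a - p"] by simp
  also have "\<dots> = (v - a) * (L/2 * (v + a - 2*p) + q)" using assms by (simp add: field_simps)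
  finally have 1: "L/2 * ((v - p + q/L)\<^sup>2 - (a - p + q/L)\<^sup>2) = (v - a) * (L/2 * (v + a - 2*p) + q)" .
  have 2: "\<mu>/2 * ((v - p)\<^sup>2 - (a - p)\<^sup>2) = (v - a) * (\<mu>/2 * (v + a - 2*p))"
    by (simp add: power2_eq_square field_simps)
  have "(L+\<mu>)/2 * ((v - (p - q/(L+\<mu>)))\<^sup>2 - (a - (p - q/(L+\<mu>)))\<^sup>2)
     = (L+\<mu>)/2 * ((v - a) * (v - p + (a - p) + 2 * (q/(L+\<mu>))))"
    using sq2[of v p "q/(L+\<mu>)" a] by simp
  also have "\<dots> = (v - a) * ((L+\<mu>)/2 * (v + a - 2*p) + q)" using assms by (simp add: field_simps)
  finally have 3: "(L+\<mu>)/2 * ((v - (p - q/(L+\<mu>)))\<^sup>2 - (a - (p - q/(L+\<mu>)))\<^sup>2) = (v - a) * ((L+\<mu>)/2 * (v + a - 2*p) + q)" .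
  show ?thesis unfolding 1 2 3 by (simp add: field_simps)
qed

lemma thresh:
  fixes xk yk g :: "real ^ 'n"
  assumes Lpos: "L > 0" and mupos: "\<mu> > 0" and lpos: "lam > 0"
  and opt: "\<And>z. lam * real (l0norm xk)
                 + L / 2 * (norm (xk - yk + (1 / L) *\<^sub>R g))\<^sup>2
                 + \<mu> / 2 * (norm (xk - yk))\<^sup>2
               \<le> lam * real (l0norm z)
                 + L / 2 * (norm (z - yk + (1 / L) *\<^sub>R g))\<^sup>2
                 + \<mu> / 2 * (norm (z - yk))\<^sup>2"
  and nz: "xk $ i \<noteq> 0"
  shows "xk $ i = yk $ i - g $ i / (L + \<mu>) \<and> 2 * lam / (L + \<mu>) \<le> (xk $ i)\<^sup>2"
proof -
  define a where "a = xk $ i"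
  define p where "p = yk $ i"
  define q where "q = g $ i"
  define w where "w = p - q / (L + \<mu>)"
  have diff: "0 \<le> lam * (real (l0norm (upd xk i v)) - real (l0norm xk))
     + (L+\<mu>)/2 * ((v - w)\<^sup>2 - (a - w)\<^sup>2)" for v
  proof -
    have n1: "(norm (upd xk i v - yk + (1 / L) *\<^sub>R g))\<^sup>2 = (norm (xk - yk + (1 / L) *\<^sub>R g))\<^sup>2
        - (a - p + q/L)\<^sup>2 + (v - p + q/L)\<^sup>2"
      by (subst sq_norm_change[of i _ "xk - yk + (1 / L) *\<^sub>R g"]) (auto simp: upd_nth a_def p_def q_def)
    have n2: "(norm (upd xk i v - yk))\<^sup>2 = (norm (xk - yk))\<^sup>2 - (a - p)\<^sup>2 + (v - p)\<^sup>2"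
      by (subst sq_norm_change[of i _ "xk - yk"]) (auto simp: upd_nth a_def p_def q_def)
    have "0 \<le> lam * (real (l0norm (upd xk i v)) - real (l0norm xk))
       + (L/2 * ((v - p + q/L)\<^sup>2 - (a - p + q/L)\<^sup>2) + \<mu>/2 * ((v - p)\<^sup>2 - (a - p)\<^sup>2))"
      using opt[of "upd xk i v"] unfolding n1 n2 by (simp add: algebra_simps)
    then show ?thesis unfolding quad_ident[OF Lpos mupos] w_def .
  qed
  have K: "L + \<mu> > 0" using Lpos mupos by simp
  have aw: "a = w"
  proof (cases "w = 0")
    case True
    have "0 \<le> lam * (-1) + (L+\<mu>)/2 * ((0 - w)\<^sup>2 - (a - w)\<^sup>2)"
      using diff[of 0] l0_upd_zero[OF nz] unfolding a_def by simp
    moreover have "(L+\<mu>)/2 * ((0 - w)\<^sup>2 - (a - w)\<^sup>2) \<le> 0" using True K by simp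
    ultimately show ?thesis using lpos by simp
  next
    case False
    have "0 \<le> (L+\<mu>)/2 * ((w - w)\<^sup>2 - (a - w)\<^sup>2)"
      using diff[of w] l0_upd_same[OF nz False] by simp
    then have "(a - w)\<^sup>2 \<le> 0" using K by (simp add: mult_le_0_iff)
    then show ?thesis by simp
  qed
  have "0 \<le> lam * (-1) + (L+\<mu>)/2 * ((0 - w)\<^sup>2 - (a - w)\<^sup>2)"
    using diff[of 0] l0_upd_zero[OF nz] unfolding a_def by simp
  then have "lam \<le> (L+\<mu>)/2 * a\<^sup>2" using aw by simp
  then have "2 * lam / (L + \<mu>) \<le> a\<^sup>2" using K by (simp add: field_simps)
  then show ?thesis using aw unfolding a_def w_def p_def q_def by simp
qed



lemma line_deriv:
  fixes f :: "'a::real_inner \<Rightarrow> real"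
  assumes grad: "\<And>z. (f has_derivative (\<lambda>h. gradf z \<bullet> h)) (at z)"
  shows "((\<lambda>t. f (y + t *\<^sub>R d)) has_real_derivative (gradf (y + t *\<^sub>R d) \<bullet> d)) (at t)"
proof -
  have "((\<lambda>t. y + t *\<^sub>R d) has_derivative (\<lambda>h. h *\<^sub>R d)) (at t)"
    by (auto intro!: derivative_eq_intros)
  from has_derivative_compose[OF this grad]
  have "((\<lambda>t. f (y + t *\<^sub>R d)) has_derivative (\<lambda>h. gradf (y + t *\<^sub>R d) \<bullet> (h *\<^sub>R d))) (at t)" .
  moreover have "(\<lambda>h. gradf (y + t *\<^sub>R d) \<bullet> (h *\<^sub>R d)) = (*) (gradf (y + t *\<^sub>R d) \<bullet> d)"
    by (auto simp: fun_eq_iff)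
  ultimately show ?thesis unfolding has_field_derivative_def by simp
qed

lemma descent_lemma:
  fixes f :: "'a::real_inner \<Rightarrow> real"
  assumes grad: "\<And>z. (f has_derivative (\<lambda>h. gradf z \<bullet> h)) (at z)"
  and Lip: "\<And>u v. norm (gradf u - gradf v) \<le> L * norm (u - v)"
  shows "f x \<le> f y + gradf y \<bullet> (x - y) + L/2 * (norm (x - y))\<^sup>2"
proof -
  define d where "d = x - y"
  define \<psi> where "\<psi> t = f (y + t *\<^sub>R d) - t * (gradf y \<bullet> d) - L/2 * t\<^sup>2 * (norm d)\<^sup>2" for t
  have D: "DERIV \<psi> t :> (gradf (y + t *\<^sub>R d) \<bullet> d - gradf y \<bullet> d - L * t * (norm d)\<^sup>2)" for t
    unfolding \<psi>_def
    by (rule derivative_eq_intros line_deriv[OF grad] refl | simp)+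
  have "\<psi> 1 \<le> \<psi> 0"
  proof (rule DERIV_nonpos_imp_nonincreasing[of 0 1 \<psi>])
    fix t :: real assume t: "0 \<le> t" "t \<le> 1"
    have "gradf (y + t *\<^sub>R d) \<bullet> d - gradf y \<bullet> d = (gradf (y + t *\<^sub>R d) - gradf y) \<bullet> d"
      by (simp add: inner_diff_left)
    also have "\<dots> \<le> norm (gradf (y + t *\<^sub>R d) - gradf y) * norm d"
      by (rule norm_cauchy_schwarz)
    also have "\<dots> \<le> L * norm (t *\<^sub>R d) * norm d"
      using Lip[of "y + t *\<^sub>R d" y] by (intro mult_right_mono) auto
    also have "\<dots> = L * t * (norm d)\<^sup>2" using t by (simp add: power2_eq_square)
    finally have "gradf (y + t *\<^sub>R d) \<bullet> d - gradf y \<bullet> d - L * t * (norm d)\<^sup>2 \<le> 0" by simp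
    with D[of t] show "\<exists>y. DERIV \<psi> t :> y \<and> y \<le> 0" by blast
  qed simp
  then show ?thesis unfolding \<psi>_def d_def by simp
qed

lemma convex_tangent:
  fixes f :: "'a::real_inner \<Rightarrow> real"
  assumes conv: "convex_on UNIV f"
  and grad: "\<And>z. (f has_derivative (\<lambda>h. gradf z \<bullet> h)) (at z)"
  shows "f c + gradf c \<bullet> (z - c) \<le> f z"
proof -
  define \<phi> where "\<phi> t = f (c + t *\<^sub>R (z - c))" for t
  have cv: "convex_on UNIV \<phi>"
    unfolding convex_on_alt
  proof (intro conjI ballI allI impI)
    fix a b u :: real assume u: "0 \<le> u \<and> u \<le> 1"
    have "c + (u *\<^sub>R a + (1 - u) *\<^sub>R b) *\<^sub>R (z - c)
        = u *\<^sub>R (c + a *\<^sub>R (z - c)) + (1 - u) *\<^sub>R (c + b *\<^sub>R (z - c))"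
      by (simp add: algebra_simps)
    then show "\<phi> (u *\<^sub>R a + (1 - u) *\<^sub>R b) \<le> u * \<phi> a + (1 - u) * \<phi> b"
      unfolding \<phi>_def using conv u unfolding convex_on_alt by auto
  qed simp
  have "(\<phi> has_real_derivative (gradf (c + 0 *\<^sub>R (z - c)) \<bullet> (z - c))) (at 0)"
    unfolding \<phi>_def by (rule line_deriv[OF grad])
  then have "\<phi> 1 - \<phi> 0 \<ge> (gradf c \<bullet> (z - c)) * (1 - 0)"
    by (intro convex_on_imp_above_tangent[OF cv]) (auto)
  then show ?thesis unfolding \<phi>_def by simp
qed



lemma sq_expand:
  fixes a g :: "'a::real_inner"
  assumes "L > 0"
  shows "L/2 * (norm (a + (1/L) *\<^sub>R g))\<^sup>2 = L/2 * (norm a)\<^sup>2 + g \<bullet> a + (norm g)\<^sup>2 / (2*L)"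
proof -
  have "(norm (a + (1/L) *\<^sub>R g))\<^sup>2 = (norm a)\<^sup>2 + 2 * (1/L) * (g \<bullet> a) + (1/L)\<^sup>2 * (norm g)\<^sup>2"
    unfolding power2_norm_eq_inner
    by (simp add: inner_add_left inner_add_right inner_commute power2_eq_square algebra_simps)
  then show ?thesis using assms by (simp add: field_simps power2_eq_square)
qed

theorem theorem1:
  fixes f :: "real ^ 'n \<Rightarrow> real" and gradf :: "real ^ 'n \<Rightarrow> real ^ 'n"
    and L \<mu> lam :: real
    and x y :: "nat \<Rightarrow> real ^ 'n"
    and Hm :: "nat \<Rightarrow> real ^ 'n ^ 'n" and \<alpha> :: "nat \<Rightarrow> real"
    and H :: "real ^ 'n \<Rightarrow> real"
  assumes conv: "convex_on UNIV f"
    and grad: "\<And>z. (f has_derivative (\<lambda>h. gradf z \<bullet> h)) (at z)"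
    and bdd: "\<exists>m. \<forall>z. m \<le> f z"
    and Lpos: "L > 0"
    and Lip: "\<And>u v. norm (gradf u - gradf v) \<le> L * norm (u - v)"
    and lpos: "lam > 0" and mupos: "\<mu> > 0"
    and Hdef: "\<And>z. H z = f z + lam * real (l0norm z)"
    and xstep: "\<And>k z. lam * real (l0norm (x k))
                 + L / 2 * (norm (x k - y k + (1 / L) *\<^sub>R gradf (y k)))\<^sup>2
                 + \<mu> / 2 * (norm (x k - y k))\<^sup>2
               \<le> lam * real (l0norm z)
                 + L / 2 * (norm (z - y k + (1 / L) *\<^sub>R gradf (y k)))\<^sup>2
                 + \<mu> / 2 * (norm (z - y k))\<^sup>2"
    and Hspd: "\<And>k. sym_pos_def_mat (Hm k)"
    and alpha_nn: "\<And>k. \<alpha> k \<ge> 0"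
    and ystep: "\<And>k. is_proj (C_set (zero_idx (x k))) (x k - \<alpha> k *\<^sub>R (Hm k *v gradf (x k))) (y (Suc k))"
    and descent: "\<And>k. f (y (Suc k)) \<le> f (x k)"
  shows "(\<forall>c. cluster_point x c \<longrightarrow> local_minimizer H c)
       \<and> (\<forall>c. cluster_point x c \<longrightarrow> (\<lambda>k. H (x k)) \<longlonglongrightarrow> H c)"
proof -
  obtain m where m: "\<And>z. m \<le> f z" using bdd by auto
  have Hlow: "m \<le> H z" for z
  proof -
    have "0 \<le> lam * real (l0norm z)" using lpos by simp
    then show ?thesis using m[of z] unfolding Hdef by linarith
  qed
  have key1: "H (x k) + \<mu>/2 * (norm (x k - y k))\<^sup>2 \<le> H (y k)" for k
  proof -
    have d: "f (x k) \<le> f (y k) + gradf (y k) \<bullet> (x k - y k) + L/2 * (norm (x k - y k))\<^sup>2"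
      by (rule descent_lemma[OF grad Lip])
    have s: "lam * real (l0norm (x k)) + L / 2 * (norm (x k - y k + (1 / L) *\<^sub>R gradf (y k)))\<^sup>2
          + \<mu> / 2 * (norm (x k - y k))\<^sup>2 \<le> lam * real (l0norm (y k)) + L / 2 * (norm ((1 / L) *\<^sub>R gradf (y k)))\<^sup>2"
      using xstep[of k "y k"] by simp
    have e1: "L / 2 * (norm ((1 / L) *\<^sub>R gradf (y k)))\<^sup>2 = (norm (gradf (y k)))\<^sup>2 / (2*L)"
      using sq_expand[OF Lpos, of 0 "gradf (y k)"] by simp
    have s2: "lam * real (l0norm (x k)) + (L/2 * (norm (x k - y k))\<^sup>2 + gradf (y k) \<bullet> (x k - y k) + (norm (gradf (y k)))\<^sup>2 / (2*L))
          + \<mu> / 2 * (norm (x k - y k))\<^sup>2 \<le> lam * real (l0norm (y k)) + (norm (gradf (y k)))\<^sup>2 / (2*L)"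
      using s unfolding sq_expand[OF Lpos] e1 .
    show ?thesis using d s2 unfolding Hdef by linarith
  qed
  have key2: "H (y (Suc k)) \<le> H (x k)" for k
  proof -
    have "y (Suc k) \<in> C_set (zero_idx (x k))" using ystep[of k] unfolding is_proj_def by auto
    then have "{i. y (Suc k) $ i \<noteq> 0} \<subseteq> {i. x k $ i \<noteq> 0}"
      unfolding C_set_def zero_idx_def by auto
    then have "l0norm (y (Suc k)) \<le> l0norm (x k)" unfolding l0norm_def by (intro card_mono) auto
    then have "lam * real (l0norm (y (Suc k))) \<le> lam * real (l0norm (x k))"
      using lpos by (intro mult_left_mono) auto
    then show ?thesis using descent[of k] unfolding Hdef by linarith
  qed
  have nn: "0 \<le> \<mu>/2 * (norm (x k - y k))\<^sup>2" for k using mupos by simp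
  have dec: "decseq (\<lambda>k. H (y k))"
  proof (rule decseq_SucI)
    fix k show "H (y (Suc k)) \<le> H (y k)"
      using key1[of k] key2[of k] nn[of k] by linarith
  qed
  obtain Hs where Hs: "(\<lambda>k. H (y k)) \<longlonglongrightarrow> Hs"
    using decseq_convergent[OF dec, of m] Hlow by blast
  have HsS: "(\<lambda>k. H (y (Suc k))) \<longlonglongrightarrow> Hs" using Hs by (rule LIMSEQ_Suc)
  have Hx: "(\<lambda>k. H (x k)) \<longlonglongrightarrow> Hs"
  proof (rule tendsto_sandwich[OF _ _ HsS Hs])
    show "\<forall>\<^sub>F k in sequentially. H (y (Suc k)) \<le> H (x k)" using key2 by simp
    have "H (x k) \<le> H (y k)" for k using key1[of k] nn[of k] by linarith
    then show "\<forall>\<^sub>F k in sequentially. H (x k) \<le> H (y k)" by simp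
  qed
  have dsq: "(\<lambda>k. (norm (x k - y k))\<^sup>2) \<longlonglongrightarrow> 0"
  proof (rule tendsto_sandwich[of "\<lambda>_. 0" _ _ "\<lambda>k. (H (y k) - H (y (Suc k))) * (2/\<mu>)"])
    show "\<forall>\<^sub>F k in sequentially. 0 \<le> (norm (x k - y k))\<^sup>2" by simp
    show "\<forall>\<^sub>F k in sequentially. (norm (x k - y k))\<^sup>2 \<le> (H (y k) - H (y (Suc k))) * (2/\<mu>)"
    proof (rule always_eventually, rule allI)
      fix k
      have "\<mu>/2 * (norm (x k - y k))\<^sup>2 \<le> H (y k) - H (y (Suc k))" using key1[of k] key2[of k] by linarith
      then show "(norm (x k - y k))\<^sup>2 \<le> (H (y k) - H (y (Suc k))) * (2/\<mu>)"
        using mupos by (simp add: field_simps)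
    qed
    show "(\<lambda>k. (H (y k) - H (y (Suc k))) * (2/\<mu>)) \<longlonglongrightarrow> 0"
      using tendsto_mult[OF tendsto_diff[OF Hs HsS] tendsto_const[of "2/\<mu>"]] by simp
  qed simp
  have dlim: "(\<lambda>k. x k - y k) \<longlonglongrightarrow> 0"
  proof -
    have "(\<lambda>k. sqrt ((norm (x k - y k))\<^sup>2)) \<longlonglongrightarrow> sqrt 0" by (rule tendsto_real_sqrt[OF dsq])
    then have "(\<lambda>k. norm (x k - y k)) \<longlonglongrightarrow> 0" by simp
    then show ?thesis by (simp add: tendsto_norm_zero_iff)
  qed
  have thr: "x k $ i \<noteq> 0 \<Longrightarrow> x k $ i = y k $ i - gradf (y k) $ i / (L + \<mu>) \<and> 2 * lam / (L + \<mu>) \<le> (x k $ i)\<^sup>2" for k i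
    by (rule thresh[OF Lpos mupos lpos xstep])
  have K: "L + \<mu> > 0" using Lpos mupos by simp
  have fcont: "isCont f z" for z using has_derivative_continuous[OF grad[of z]] .
  have main: "local_minimizer H c \<and> (\<lambda>k. H (x k)) \<longlonglongrightarrow> H c" if cp: "cluster_point x c" for c
  proof -
    obtain r where r: "strict_mono r" "(x \<circ> r) \<longlonglongrightarrow> c" using cp unfolding cluster_point_def by auto
    have xr: "(\<lambda>j. x (r j)) \<longlonglongrightarrow> c" using r(2) by (simp add: comp_def)
    have dr: "(\<lambda>j. x (r j) - y (r j)) \<longlonglongrightarrow> 0"
      using LIMSEQ_subseq_LIMSEQ[OF dlim r(1)] by (simp add: comp_def)
    have yr: "(\<lambda>j. y (r j)) \<longlonglongrightarrow> c"
      using tendsto_diff[OF xr dr] by simp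
    have gr: "(\<lambda>j. gradf (y (r j))) \<longlonglongrightarrow> gradf c"
    proof (rule LIM_zero_cancel, rule Lim_null_comparison)
      show "\<forall>\<^sub>F j in sequentially. norm (gradf (y (r j)) - gradf c) \<le> L * norm (y (r j) - c)"
        using Lip by simp
      have "(\<lambda>j. y (r j) - c) \<longlonglongrightarrow> 0" using yr by (rule LIM_zero)
      then have "(\<lambda>j. norm (y (r j) - c)) \<longlonglongrightarrow> 0" by (simp add: tendsto_norm_zero_iff)
      then show "(\<lambda>j. L * norm (y (r j) - c)) \<longlonglongrightarrow> 0" using tendsto_mult_right_zero by blast
    qed
    have supp: "\<forall>\<^sub>F j in sequentially. (x (r j) $ i \<noteq> 0 \<longleftrightarrow> c $ i \<noteq> 0)" for i
    proof (cases "c $ i = 0")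
      case True
      have "(\<lambda>j. (x (r j) $ i)\<^sup>2) \<longlonglongrightarrow> (c $ i)\<^sup>2" by (intro tendsto_intros xr)
      then have "\<forall>\<^sub>F j in sequentially. (x (r j) $ i)\<^sup>2 < 2 * lam / (L + \<mu>)"
        using True K lpos by (intro order_tendstoD(2)[OF \<open>(\<lambda>j. (x (r j) $ i)\<^sup>2) \<longlonglongrightarrow> (c $ i)\<^sup>2\<close>]) auto
      then show ?thesis
      proof (rule eventually_mono)
        fix j assume "(x (r j) $ i)\<^sup>2 < 2 * lam / (L + \<mu>)"
        then show "(x (r j) $ i \<noteq> 0 \<longleftrightarrow> c $ i \<noteq> 0)" using thr[of "r j" i] True by auto
      qed
    next
      case False
      have "(\<lambda>j. \<bar>x (r j) $ i\<bar>) \<longlonglongrightarrow> \<bar>c $ i\<bar>" by (intro tendsto_intros xr)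
      then have "\<forall>\<^sub>F j in sequentially. 0 < \<bar>x (r j) $ i\<bar>"
        using False by (intro order_tendstoD(1)[OF \<open>(\<lambda>j. \<bar>x (r j) $ i\<bar>) \<longlonglongrightarrow> \<bar>c $ i\<bar>\<close>]) auto
      then show ?thesis using False by (auto elim: eventually_mono)
    qed
    have suppall: "\<forall>\<^sub>F j in sequentially. \<forall>i. (x (r j) $ i \<noteq> 0 \<longleftrightarrow> c $ i \<noteq> 0)"
      by (rule eventually_all_finite[OF supp])
    have gz: "gradf c $ i = 0" if ci: "c $ i \<noteq> 0" for i
    proof -
      have "(\<lambda>j. gradf (y (r j)) $ i) \<longlonglongrightarrow> gradf c $ i" by (intro tendsto_intros gr)
      moreover have "(\<lambda>j. (L + \<mu>) * (y (r j) $ i - x (r j) $ i)) \<longlonglongrightarrow> (L + \<mu>) * (c $ i - c $ i)"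
        by (intro tendsto_intros xr yr)
      moreover have "\<forall>\<^sub>F j in sequentially. (L + \<mu>) * (y (r j) $ i - x (r j) $ i) = gradf (y (r j)) $ i"
        using supp[of i]
      proof (rule eventually_mono)
        fix j assume "(x (r j) $ i \<noteq> 0 \<longleftrightarrow> c $ i \<noteq> 0)"
        then have "x (r j) $ i = y (r j) $ i - gradf (y (r j)) $ i / (L + \<mu>)" using thr ci by blast
        then show "(L + \<mu>) * (y (r j) $ i - x (r j) $ i) = gradf (y (r j)) $ i" using K by (simp add: field_simps)
      qed
      ultimately have "(\<lambda>j. gradf (y (r j)) $ i) \<longlonglongrightarrow> 0"
        using Lim_transform_eventually by fastforce
      then show ?thesis using \<open>(\<lambda>j. gradf (y (r j)) $ i) \<longlonglongrightarrow> gradf c $ i\<close> LIMSEQ_unique by blast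
    qed
    have Hr: "(\<lambda>j. H (x (r j))) \<longlonglongrightarrow> H c"
    proof -
      have "(\<lambda>j. f (x (r j)) + lam * real (l0norm c)) \<longlonglongrightarrow> f c + lam * real (l0norm c)"
        by (intro tendsto_intros isCont_tendsto_compose[OF fcont xr])
      moreover have "\<forall>\<^sub>F j in sequentially. f (x (r j)) + lam * real (l0norm c) = H (x (r j))"
        using suppall
      proof (rule eventually_mono)
        fix j assume "\<forall>i. (x (r j) $ i \<noteq> 0 \<longleftrightarrow> c $ i \<noteq> 0)"
        then have "{i. x (r j) $ i \<noteq> 0} = {i. c $ i \<noteq> 0}" by auto
        then show "f (x (r j)) + lam * real (l0norm c) = H (x (r j))" unfolding Hdef l0norm_def by simp
      qed
      ultimately show ?thesis unfolding Hdef[of c] by (rule Lim_transform_eventually)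
    qed
    have "(\<lambda>j. H (x (r j))) \<longlonglongrightarrow> Hs" using LIMSEQ_subseq_LIMSEQ[OF Hx r(1)] by (simp add: comp_def)
    then have "Hs = H c" using Hr LIMSEQ_unique by blast
    then have P2: "(\<lambda>k. H (x k)) \<longlonglongrightarrow> H c" using Hx by simp
    have P1: "local_minimizer H c"
    proof -
      define g where "g = gradf c"
      define E where "E = insert (lam / (norm g + 1)) ((\<lambda>i. \<bar>c $ i\<bar>) ` {i. c $ i \<noteq> 0})"
      define e where "e = Min E"
      have fE: "finite E" unfolding E_def by simp
      have Epos: "\<forall>t\<in>E. t > 0" unfolding E_def using lpos by (auto intro!: divide_pos_pos add_nonneg_pos)
      have epos: "e > 0" unfolding e_def using fE Epos by (simp add: E_def)
      have e1: "e \<le> lam / (norm g + 1)" unfolding e_def using fE by (simp add: E_def)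
      have e2: "c $ i \<noteq> 0 \<Longrightarrow> e \<le> \<bar>c $ i\<bar>" for i unfolding e_def using fE by (simp add: E_def)
      show ?thesis unfolding local_minimizer_def
      proof (intro exI[of _ e] conjI epos ballI)
        fix z assume z: "z \<in> ball c e"
        then have dz: "norm (z - c) < e" by (simp add: dist_norm norm_minus_commute)
        have sub: "{i. c $ i \<noteq> 0} \<subseteq> {i. z $ i \<noteq> 0}"
        proof
          fix i assume "i \<in> {i. c $ i \<noteq> 0}"
          then have ci: "c $ i \<noteq> 0" by simp
          have "\<bar>z $ i - c $ i\<bar> \<le> norm (z - c)" using component_le_norm_cart[of "z - c" i] by simp
          then show "i \<in> {i. z $ i \<noteq> 0}" using dz e2[OF ci] by auto
        qed
        have tan: "f c + g \<bullet> (z - c) \<le> f z" unfolding g_def by (rule convex_tangent[OF conv grad])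
        show "H c \<le> H z"
        proof (cases "{i. c $ i \<noteq> 0} = {i. z $ i \<noteq> 0}")
          case True
          have "g \<bullet> (z - c) = (\<Sum>i\<in>UNIV. g $ i * (z - c) $ i)" by (simp add: inner_vec_def)
          also have "\<dots> = 0"
          proof (rule sum.neutral, rule ballI)
            fix i :: 'n
            show "g $ i * (z - c) $ i = 0"
            proof (cases "c $ i = 0")
              case True
              then have "z $ i = 0" using \<open>{i. c $ i \<noteq> 0} = {i. z $ i \<noteq> 0}\<close> by blast
              then show ?thesis using True by simp
            next
              case False then show ?thesis using gz[OF False] g_def by simp
            qed
          qed
          finally have "f c \<le> f z" using tan by simp
          moreover have "l0norm z = l0norm c" using True unfolding l0norm_def by simp
          ultimately show ?thesis unfolding Hdef by simp
        next
          case False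
          then have "{i. c $ i \<noteq> 0} \<subset> {i. z $ i \<noteq> 0}" using sub by auto
          then have "l0norm c < l0norm z" unfolding l0norm_def by (intro psubset_card_mono) auto
          then have lz: "real (l0norm c) + 1 \<le> real (l0norm z)" by simp
          have "- (g \<bullet> (z - c)) \<le> norm g * norm (z - c)"
            using norm_cauchy_schwarz[of "-g" "z - c"] by simp
          also have "\<dots> \<le> norm g * e" using dz by (intro mult_left_mono) auto
          also have "\<dots> \<le> norm g * (lam / (norm g + 1))" using e1 by (intro mult_left_mono) auto
          also have "\<dots> < lam"
          proof -
            have lt1: "norm g / (norm g + 1) < 1"
              by (subst divide_less_eq_1_pos) (auto intro: add_nonneg_pos)
            have "norm g * (lam / (norm g + 1)) = lam * (norm g / (norm g + 1))" by simp
            also have "\<dots> < lam * 1" using lpos lt1 by (intro mult_strict_left_mono) auto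
            finally show ?thesis by simp
          qed
          finally have "f c - lam < f z" using tan by simp
          moreover have "lam * (real (l0norm c) + 1) \<le> lam * real (l0norm z)"
            using lz lpos by (intro mult_left_mono) auto
          ultimately show ?thesis unfolding Hdef by (simp add: algebra_simps)
        qed
      qed
    qed
    show ?thesis using P1 P2 by simp
  qed
  show ?thesis using main by blast
qed

end
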